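(* Consider a cellular network with $n$ base stations (cells) $\mathcal{N}=\{1,\dots,n\}$, where base station $i$ serves a nonempty set $\mathcal{J}_i$ of users (the sets $\mathcal{J}_i$ are pairwise disjoint), with channel power gains $g_{kj}>0$ from base station $k$ to user $j$ and noise power $\sigma^2>0$. For a power vector $\mathbf{p}>\mathbf{0}$, a load vector $\mathbf{x}\ge\mathbf{0}$ and a rate vector $\mathbf{r}=(r_{ij})_{i\in\mathcal{N},j\in\mathcal{J}_i}>\mathbf{0}$, define $$\mathrm{SINR}_{ij}(\mathbf{x},\mathbf{p})=\frac{p_i g_{ij}}{\sum_{k\in\mathcal{N}\setminus\{i\}} p_k g_{kj} x_k+\sigma^2},\qquad f_i(\mathbf{x};\mathbf{r},\mathbf{p})=\sum_{j\in\mathcal{J}_i}\frac{r_{ij}}{\log\big(1+\mathrm{SINR}_{ij}(\mathbf{x},\mathbf{p})\big)},$$ and $\mathbf{f}=(f_1,\dots,f_n)^T$. Let $\mathbf{d}_{\min}>\mathbf{0}$ be a given minimum-rate vector and consider Problem P0: $$\min_{\mathbf{p}>\mathbf{0},\ \mathbf{r}>\mathbf{0},\ \mathbf{0}<\mathbf{x}\le\mathbf{1}} \mathbf{x}^T\mathbf{p}\quad\text{s.t.}\quad \mathbf{x}=\mathbf{f}(\mathbf{x};\mathbf{r},\mathbf{p}),\quad \mathbf{r}\ge\mathbf{d}_{\min}.$$ Suppose full load is implementable, i.e., there exists $\mathbf{p}>\mathbf{0}$ with $\mathbf{1}=\mathbf{f}(\mathbf{1};\mathbf{d}_{\min},\mathbf{p})$.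 Then the optimal solution $(\mathbf{p}^\star,\mathbf{r}^\star,\mathbf{x}^\star)$ of Problem P0 is as follows: $\mathbf{r}^\star=\mathbf{d}_{\min}$, and $\mathbf{p}^\star$ is such that $\mathbf{x}^\star=\mathbf{1}$; thus $\mathbf{p}^\star$ is given implicitly by $\mathbf{1}=\mathbf{f}(\mathbf{1};\mathbf{d}_{\min},\mathbf{p}^\star)$.
   Context: All vector inequalities are componentwise; $\mathbf{a}>\mathbf{0}$ means every component is strictly positive; $\mathbf{0}$ and $\mathbf{1}$ are the all-zeros and all-ones vectors; $\log$ is the natural logarithm. The quantity $x_i$ is the load of cell $i$ and $p_i$ the transmit power per resource unit of base station $i$; $\mathbf{x}^T\mathbf{p}=\sum_i x_ip_i$ is the sum transmission energy. The equation $\mathbf{x}=\mathbf{f}(\mathbf{x};\mathbf{r},\mathbf{p})$ is called the non-linear load coupling equation (NLCE). *)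

theory Defs
  imports Complex_Main
begin

(* Cells are the elements of a finite type 'c (so N = UNIV :: 'c set);
   users are elements of type 'u; J i is the user set of cell i.
   Vectors over cells are functions 'c => real; the rate vector is
   r :: 'c => 'u => real, only the entries r i j with j in J i matter. *)

definition SINR :: "('c::finite \<Rightarrow> 'u \<Rightarrow> real) \<Rightarrow> real \<Rightarrow> ('c \<Rightarrow> real) \<Rightarrow> ('c \<Rightarrow> real) \<Rightarrow> 'c \<Rightarrow> 'u \<Rightarrow> real" where
  "SINR g \<sigma>2 x p i j = p i * g i j / ((\<Sum>k\<in>UNIV - {i}. p k * g k j * x k) + \<sigma>2)"

definition load_f :: "('c::finite \<Rightarrow> 'u set) \<Rightarrow> ('c \<Rightarrow> 'u \<Rightarrow> real) \<Rightarrow> real \<Rightarrow>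
    ('c \<Rightarrow> real) \<Rightarrow> ('c \<Rightarrow> 'u \<Rightarrow> real) \<Rightarrow> ('c \<Rightarrow> real) \<Rightarrow> 'c \<Rightarrow> real" where
  "load_f J g \<sigma>2 x r p i = (\<Sum>j\<in>J i. r i j / ln (1 + SINR g \<sigma>2 x p i j))"

definition energy :: "('c::finite \<Rightarrow> real) \<Rightarrow> ('c \<Rightarrow> real) \<Rightarrow> real" where
  "energy x p = (\<Sum>i\<in>UNIV. x i * p i)"

definition P0_feasible :: "('c::finite \<Rightarrow> 'u set) \<Rightarrow> ('c \<Rightarrow> 'u \<Rightarrow> real) \<Rightarrow> real \<Rightarrow>
    ('c \<Rightarrow> 'u \<Rightarrow> real) \<Rightarrow> ('c \<Rightarrow> real) \<Rightarrow> ('c \<Rightarrow> 'u \<Rightarrow> real) \<Rightarrow> ('c \<Rightarrow> real) \<Rightarrow> bool" where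
  "P0_feasible J g \<sigma>2 dmin p r x \<longleftrightarrow>
     (\<forall>i. p i > 0) \<and>
     (\<forall>i. \<forall>j\<in>J i. r i j > 0) \<and>
     (\<forall>i. 0 < x i \<and> x i \<le> 1) \<and>
     (\<forall>i. x i = load_f J g \<sigma>2 x r p i) \<and>
     (\<forall>i. \<forall>j\<in>J i. r i j \<ge> dmin i j)"

definition P0_optimal :: "('c::finite \<Rightarrow> 'u set) \<Rightarrow> ('c \<Rightarrow> 'u \<Rightarrow> real) \<Rightarrow> real \<Rightarrow>
    ('c \<Rightarrow> 'u \<Rightarrow> real) \<Rightarrow> ('c \<Rightarrow> real) \<Rightarrow> ('c \<Rightarrow> 'u \<Rightarrow> real) \<Rightarrow> ('c \<Rightarrow> real) \<Rightarrow> bool" where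
  "P0_optimal J g \<sigma>2 dmin p r x \<longleftrightarrow>
     P0_feasible J g \<sigma>2 dmin p r x \<and>
     (\<forall>p' r' x'. P0_feasible J g \<sigma>2 dmin p' r' x' \<longrightarrow> energy x p \<le> energy x' p')"

end

theory Submission
  imports Defs
begin

lemma ln_conc:
  fixes x c :: real assumes "0 < x" "x < 1" "0 < c"
  shows "x * ln (1 + c) < ln (1 + x * c)"
proof -
  define m where "m = 1 + x * c"
  have xc: "x * c > 0" using assms by simp
  have "x * c < c" using assms by simp
  then have m: "m > 0" "1 \<noteq> m" "1 + c \<noteq> m" using xc unfolding m_def by linarith+
  have a: "ln 1 - ln m < (1 - m) / m" using ln_diff_less[of 1 m] m by simp
  have b: "ln (1+c) - ln m < (1 + c - m) / m" using ln_diff_less[of "1+c" m] m assms by simp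
  have "(1-x) * (ln 1 - ln m) + x * (ln (1+c) - ln m) < (1-x) * ((1 - m) / m) + x * ((1 + c - m) / m)"
    using a b assms by (intro add_strict_mono mult_strict_left_mono) auto
  also have "\<dots> = 0" using m(1) by (simp add: m_def field_simps)
  finally show ?thesis by (simp add: m_def algebra_simps)
qed

lemma SINR_pos:
  assumes "\<And>k j. g k j > 0" "\<sigma>2 > 0" "\<forall>k. p k > 0" "\<forall>k. x k \<ge> 0"
  shows "SINR g \<sigma>2 x p i j > 0"
proof -
  have "(\<Sum>k\<in>UNIV - {i}. p k * g k j * x k) \<ge> 0"
    using assms by (intro sum_nonneg) (simp add: less_imp_le)
  then show ?thesis using assms by (simp add: SINR_def)
qed

lemma compare:
  fixes J :: "'c::finite \<Rightarrow> 'u set"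
  assumes J_fin: "\<And>i. finite (J i)"
    and J_ne: "\<And>i. J i \<noteq> {}"
    and g_pos: "\<And>k j. g k j > 0"
    and \<sigma>2_pos: "\<sigma>2 > 0"
    and d_pos: "\<And>i j. j \<in> J i \<Longrightarrow> d i j > 0"
    and q_pos: "\<forall>i. q i > 0" and ps_pos: "\<forall>i. ps i > 0"
    and hq: "\<forall>i. load_f J g \<sigma>2 (\<lambda>_. 1) d q i \<le> 1"
    and hp: "\<forall>i. load_f J g \<sigma>2 (\<lambda>_. 1) d ps i = 1"
  shows "ps k \<le> q k"
proof -
  define \<alpha> where "\<alpha> = Max (range (\<lambda>i. ps i / q i))"
  have "\<alpha> \<in> range (\<lambda>i. ps i / q i)" unfolding \<alpha>_def by (rule Max_in) auto
  then obtain i where i: "\<alpha> = ps i / q i" by blast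
  have ge: "ps k / q k \<le> \<alpha>" for k unfolding \<alpha>_def by (intro Max_ge) auto
  have "\<alpha> \<le> 1"
  proof (rule ccontr)
    assume "\<not> \<alpha> \<le> 1"
    then have a1: "\<alpha> > 1" by simp
    have le: "ps k \<le> \<alpha> * q k" for k using ge[of k] q_pos by (simp add: divide_le_eq)
    have psi: "ps i = \<alpha> * q i" using i q_pos[rule_format, of i] by (simp add: field_simps)
    have "load_f J g \<sigma>2 (\<lambda>_. 1) d ps i < load_f J g \<sigma>2 (\<lambda>_. 1) d q i"
      unfolding load_f_def
    proof (rule sum_strict_mono[OF J_fin J_ne])
      fix j assume j: "j \<in> J i"
      define Iq where "Iq = (\<Sum>k\<in>UNIV - {i}. q k * g k j * 1)"
      define Ip where "Ip = (\<Sum>k\<in>UNIV - {i}. ps k * g k j * 1)"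
      have Iq0: "Iq \<ge> 0" unfolding Iq_def using q_pos g_pos by (intro sum_nonneg) (simp add: less_imp_le)
      have "Ip \<le> (\<Sum>k\<in>UNIV - {i}. \<alpha> * (q k * g k j * 1))" unfolding Ip_def
        using le g_pos by (intro sum_mono) (simp add: mult_right_mono less_imp_le)
      then have Ip: "Ip \<le> \<alpha> * Iq" unfolding Iq_def by (simp add: sum_distrib_left)
      have Ip0: "Ip \<ge> 0" unfolding Ip_def using ps_pos g_pos by (intro sum_nonneg) (simp add: less_imp_le)
      have sq: "SINR g \<sigma>2 (\<lambda>_. 1) q i j = q i * g i j / (Iq + \<sigma>2)" by (simp add: SINR_def Iq_def)
      have sp: "SINR g \<sigma>2 (\<lambda>_. 1) ps i j = \<alpha> * q i * g i j / (Ip + \<sigma>2)" by (simp add: SINR_def Ip_def psi)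
      have pos: "q i * g i j > 0" using q_pos g_pos by simp
      have "q i * g i j / (Iq + \<sigma>2) = \<alpha> * q i * g i j / (\<alpha> * Iq + \<alpha> * \<sigma>2)"
        using a1 Iq0 \<sigma>2_pos by (simp add: distrib_left[symmetric] mult.assoc)
      also have "\<dots> < \<alpha> * q i * g i j / (\<alpha> * Iq + \<sigma>2)"
      proof -
        have h1: "\<alpha> * q i * g i j > 0" using a1 pos by (simp add: mult.assoc)
        have h0: "\<alpha> * Iq \<ge> 0" using a1 Iq0 by simp
        have h2: "\<alpha> * Iq + \<sigma>2 > 0" "\<alpha> * Iq \<ge> 0" using h0 \<sigma>2_pos by linarith+
        have h3: "\<alpha> * \<sigma>2 > \<sigma>2" using a1 \<sigma>2_pos by simp
        show ?thesis using h1 h2 h3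
          by (intro divide_strict_left_mono) (auto intro: mult_pos_pos)
      qed
      also have "\<dots> \<le> \<alpha> * q i * g i j / (Ip + \<sigma>2)"
        using a1 Ip Ip0 \<sigma>2_pos pos mult_pos_pos[of \<alpha> "q i * g i j"]
        by (intro divide_left_mono) (auto simp: mult.assoc)
      finally have lt: "SINR g \<sigma>2 (\<lambda>_. 1) q i j < SINR g \<sigma>2 (\<lambda>_. 1) ps i j" using sq sp by simp
      have p0: "SINR g \<sigma>2 (\<lambda>_. 1) q i j > 0" using SINR_pos[where g=g and p=q and x="\<lambda>_. 1", OF g_pos \<sigma>2_pos q_pos] by simp
      have "ln (1 + SINR g \<sigma>2 (\<lambda>_. 1) q i j) < ln (1 + SINR g \<sigma>2 (\<lambda>_. 1) ps i j)"
        using lt p0 by simp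
      moreover have "ln (1 + SINR g \<sigma>2 (\<lambda>_. 1) q i j) > 0" using p0 by simp
      ultimately show "d i j / ln (1 + SINR g \<sigma>2 (\<lambda>_. 1) ps i j) < d i j / ln (1 + SINR g \<sigma>2 (\<lambda>_. 1) q i j)"
        using d_pos[OF j] by (intro divide_strict_left_mono) auto
    qed
    then show False using hq hp by (metis not_le)
  qed
  moreover have "ps k \<le> \<alpha> * q k" using ge[of k] q_pos by (simp add: divide_le_eq)
  moreover have "\<alpha> * q k \<le> q k" using calculation(1) q_pos[rule_format, of k]
    by (simp add: mult_le_cancel_right1)
  ultimately show ?thesis by linarith
qed

lemma feas_bound:
  fixes J :: "'c::finite \<Rightarrow> 'u set"
  assumes J_fin: "\<And>i. finite (J i)"
    and J_ne: "\<And>i. J i \<noteq> {}"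
    and g_pos: "\<And>k j. g k j > 0"
    and \<sigma>2_pos: "\<sigma>2 > 0"
    and dmin_pos: "\<And>i j. j \<in> J i \<Longrightarrow> dmin i j > 0"
    and F: "P0_feasible J g \<sigma>2 dmin p r x"
  shows "load_f J g \<sigma>2 (\<lambda>_. 1) dmin (\<lambda>k. x k * p k) i \<le> 1 \<and>
         (load_f J g \<sigma>2 (\<lambda>_. 1) dmin (\<lambda>k. x k * p k) i = 1 \<longrightarrow> x i = 1 \<and> (\<forall>j\<in>J i. r i j = dmin i j))"
proof -
  have p: "\<forall>k. p k > 0" and rp: "\<forall>i. \<forall>j\<in>J i. r i j > 0" and xb: "\<forall>i. 0 < x i \<and> x i \<le> 1"
    and xl: "\<forall>i. x i = load_f J g \<sigma>2 x r p i" and rd: "\<forall>i. \<forall>j\<in>J i. r i j \<ge> dmin i j"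
    using F unfolding P0_feasible_def by auto
  define c where "c j = SINR g \<sigma>2 x p i j" for j
  have c0: "c j > 0" for j unfolding c_def using SINR_pos[where g=g and p=p and x=x, OF g_pos \<sigma>2_pos p] xb by (simp add: less_imp_le)
  have sx: "SINR g \<sigma>2 (\<lambda>_. 1) (\<lambda>k. x k * p k) i j = x i * c j" for j
    unfolding c_def SINR_def by (simp add: mult_ac)
  define t1 where "t1 j = dmin i j / ln (1 + x i * c j)" for j
  define t2 where "t2 j = r i j / (x i * ln (1 + c j))" for j
  have L: "load_f J g \<sigma>2 (\<lambda>_. 1) dmin (\<lambda>k. x k * p k) i = sum t1 (J i)"
    unfolding load_f_def t1_def sx ..
  have xi: "0 < x i" "x i \<le> 1" using xb by auto
  have "sum t2 (J i) = (\<Sum>j\<in>J i. r i j / ln (1 + c j)) / x i"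
    unfolding t2_def sum_divide_distrib by (simp add: field_simps)
  also have "\<dots> = 1" using xl xi unfolding load_f_def c_def by simp
  finally have S2: "sum t2 (J i) = 1" .
  have lnc: "ln (1 + c j) > 0" for j using c0[of j] by simp
  have xc: "x i * ln (1 + c j) \<le> ln (1 + x i * c j)" for j
  proof (cases "x i = 1")
    case False then show ?thesis using ln_conc[of "x i" "c j"] xi c0[of j] by simp
  qed simp
  have t12: "t1 j \<le> t2 j" if j: "j \<in> J i" for j
  proof -
    have "t1 j \<le> dmin i j / (x i * ln (1 + c j))" unfolding t1_def
      using dmin_pos[OF j] xc[of j] xi lnc[of j] mult_pos_pos[OF xi(1) c0[of j]]
      by (intro divide_left_mono) (auto intro!: mult_pos_pos)
    also have "\<dots> \<le> t2 j" unfolding t2_def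
      using rd j xi lnc[of j] by (intro divide_right_mono) auto
    finally show ?thesis .
  qed
  have le: "sum t1 (J i) \<le> 1" using S2 t12 sum_mono by (metis (no_types, lifting))
  show ?thesis
  proof (intro conjI impI)
    show "load_f J g \<sigma>2 (\<lambda>_. 1) dmin (\<lambda>k. x k * p k) i \<le> 1" using L le by simp
    assume eq: "load_f J g \<sigma>2 (\<lambda>_. 1) dmin (\<lambda>k. x k * p k) i = 1"
    show x1: "x i = 1"
    proof (rule ccontr)
      assume "x i \<noteq> 1"
      then have xlt: "x i < 1" using xi by simp
      have "sum t1 (J i) < sum t2 (J i)"
      proof (rule sum_strict_mono[OF J_fin J_ne])
        fix j assume j: "j \<in> J i"
        have "t1 j < dmin i j / (x i * ln (1 + c j))" unfolding t1_def
          using dmin_pos[OF j] ln_conc[OF xi(1) xlt c0[of j]] xi lnc[of j] mult_pos_pos[OF xi(1) c0[of j]]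
          by (intro divide_strict_left_mono) (auto intro!: mult_pos_pos)
        also have "\<dots> \<le> t2 j" unfolding t2_def
          using rd j xi lnc[of j] by (intro divide_right_mono) auto
        finally show "t1 j < t2 j" .
      qed
      then show False using S2 eq L by simp
    qed
    have "(\<Sum>j\<in>J i. t2 j - t1 j) = 0" using S2 eq L by (simp add: sum_subtractf)
    then have "\<forall>j\<in>J i. t2 j - t1 j = 0" using sum_nonneg_eq_0_iff[OF J_fin, of i "\<lambda>j. t2 j - t1 j"] t12 by simp
    then show "\<forall>j\<in>J i. r i j = dmin i j" using x1 lnc unfolding t1_def t2_def
      by (auto simp: field_simps) (metis less_numeral_extra(3) lnc)
  qed
qed

theorem theorem1:
  fixes J :: "'c::finite \<Rightarrow> 'u set"
    and g :: "'c \<Rightarrow> 'u \<Rightarrow> real"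
    and \<sigma>2 :: real
    and dmin :: "'c \<Rightarrow> 'u \<Rightarrow> real"
  assumes J_fin: "\<And>i. finite (J i)"
    and J_ne: "\<And>i. J i \<noteq> {}"
    and J_disj: "\<And>i i'. i \<noteq> i' \<Longrightarrow> J i \<inter> J i' = {}"
    and g_pos: "\<And>k j. g k j > 0"
    and \<sigma>2_pos: "\<sigma>2 > 0"
    and dmin_pos: "\<And>i j. j \<in> J i \<Longrightarrow> dmin i j > 0"
    and full_load: "\<exists>p. (\<forall>i. p i > 0) \<and> (\<forall>i. 1 = load_f J g \<sigma>2 (\<lambda>_. 1) dmin p i)"
  shows "(\<exists>p r x. P0_optimal J g \<sigma>2 dmin p r x) \<and>
         (\<forall>p r x. P0_optimal J g \<sigma>2 dmin p r x \<longrightarrow>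
            (\<forall>i. \<forall>j\<in>J i. r i j = dmin i j) \<and>
            (\<forall>i. x i = 1) \<and>
            (\<forall>i. 1 = load_f J g \<sigma>2 (\<lambda>_. 1) dmin p i))"
proof -
  obtain ps where ps_pos: "\<forall>i. ps i > 0" and hp: "\<forall>i. 1 = load_f J g \<sigma>2 (\<lambda>_. 1) dmin ps i"
    using full_load by blast
  have hp': "\<forall>i. load_f J g \<sigma>2 (\<lambda>_. 1) dmin ps i = 1" using hp by simp
  have key: "ps k \<le> x k * p k" if F: "P0_feasible J g \<sigma>2 dmin p r x" for p r x k
  proof -
    have q: "\<forall>i. x i * p i > 0" using F unfolding P0_feasible_def by auto
    show ?thesis
      using compare[OF J_fin J_ne g_pos \<sigma>2_pos dmin_pos q ps_pos _ hp']
        feas_bound[OF J_fin J_ne g_pos \<sigma>2_pos dmin_pos F] by blast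
  qed
  have Fs: "P0_feasible J g \<sigma>2 dmin ps dmin (\<lambda>_. 1)"
    unfolding P0_feasible_def using ps_pos dmin_pos hp by auto
  have Es: "energy (\<lambda>_. 1) ps \<le> energy x p" if F: "P0_feasible J g \<sigma>2 dmin p r x" for p r x
    unfolding energy_def using key[OF F] by (simp add: sum_mono)
  have Os: "P0_optimal J g \<sigma>2 dmin ps dmin (\<lambda>_. 1)"
    unfolding P0_optimal_def using Fs Es by blast
  have opt: "(\<forall>i. \<forall>j\<in>J i. r i j = dmin i j) \<and> (\<forall>i. x i = 1) \<and>
      (\<forall>i. 1 = load_f J g \<sigma>2 (\<lambda>_. 1) dmin p i)" if O: "P0_optimal J g \<sigma>2 dmin p r x" for p r x
  proof -
    from O have F: "P0_feasible J g \<sigma>2 dmin p r x" and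
      E: "energy x p \<le> energy (\<lambda>_. 1) ps" using Fs unfolding P0_optimal_def by auto
    have "(\<Sum>k\<in>UNIV. x k * p k - ps k) = 0"
      using E Es[OF F] by (simp add: energy_def sum_subtractf)
    then have "\<forall>k\<in>UNIV. x k * p k - ps k = 0"
      using sum_nonneg_eq_0_iff[of UNIV "\<lambda>k. x k * p k - ps k"] key[OF F] by simp
    then have qe: "(\<lambda>k. x k * p k) = ps" by auto
    have FB: "\<And>i. x i = 1 \<and> (\<forall>j\<in>J i. r i j = dmin i j)"
      using feas_bound[OF J_fin J_ne g_pos \<sigma>2_pos dmin_pos F] hp' qe by simp
    have "p = ps" using qe FB by auto
    then show ?thesis using hp FB by simp
  qed
  show ?thesis using Os opt by blast
qed

end
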